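(* Let $\mathrm{k}$ be an infinite field. For $n,m\in\{2,3\}$, the $\mathrm{k}$-algebra $\mathrm{k}[T]/(T^n)\times\mathrm{k}[T]/(T^m)$ has infinitely many subalgebras.
   Context: Subalgebras are unital (contain $1$). *)

theory Defs
  imports "HOL-Computational_Algebra.Polynomial"
begin

text \<open>The truncated polynomial algebra k[T]/(T^n), represented by the canonical
  remainders modulo T^n (polynomials of degree < n), with multiplication
  followed by reduction modulo T^n.\<close>

definition trunc_alg :: "nat \<Rightarrow> 'a::field poly set" where
  "trunc_alg n = {p. p mod monom 1 n = p}"

definition prod_alg :: "nat \<Rightarrow> nat \<Rightarrow> ('a::field poly \<times> 'a poly) set" where
  "prod_alg n m = trunc_alg n \<times> trunc_alg m"

definition prod_mult :: "nat \<Rightarrow> nat \<Rightarrow> ('a::field poly \<times> 'a poly) \<Rightarrow> ('a poly \<times> 'a poly) \<Rightarrow> ('a poly \<times> 'a poly)" where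
  "prod_mult n m x y = ((fst x * fst y) mod monom 1 n, (snd x * snd y) mod monom 1 m)"

definition is_subalgebra :: "nat \<Rightarrow> nat \<Rightarrow> ('a::field poly \<times> 'a poly) set \<Rightarrow> bool" where
  "is_subalgebra n m S \<longleftrightarrow>
     S \<subseteq> prod_alg n m \<and>
     (1, 1) \<in> S \<and>
     (\<forall>x\<in>S. \<forall>y\<in>S. (fst x + fst y, snd x + snd y) \<in> S) \<and>
     (\<forall>c. \<forall>x\<in>S. (smult c (fst x), smult c (snd x)) \<in> S) \<and>
     (\<forall>x\<in>S. \<forall>y\<in>S. prod_mult n m x y \<in> S)"

end

theory Submission
  imports Defs
begin

lemma coeff_mod_monom:
  fixes p :: "'a::field poly"
  assumes "i < n"
  shows "coeff (p mod monom 1 n) i = coeff p i"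
proof -
  have "p = (p div monom 1 n) * monom 1 n + p mod monom 1 n" by (simp add: div_mult_mod_eq)
  hence "coeff p i = coeff ((p div monom 1 n) * monom 1 n) i + coeff (p mod monom 1 n) i"
    by (metis coeff_add)
  moreover have "coeff ((p div monom 1 n) * monom 1 n) i = 0"
    using assms by (simp add: mult.commute[of _ "monom 1 n"] coeff_monom_mult)
  ultimately show ?thesis by simp
qed

definition Sc :: "nat \<Rightarrow> nat \<Rightarrow> 'a::field \<Rightarrow> ('a poly \<times> 'a poly) set" where
  "Sc n m c = {x. fst x \<in> trunc_alg n \<and> snd x \<in> trunc_alg m \<and>
      coeff (fst x) 0 = coeff (snd x) 0 \<and> coeff (snd x) 1 = c * coeff (fst x) 1}"

lemma trunc_add: "p \<in> trunc_alg n \<Longrightarrow> q \<in> trunc_alg n \<Longrightarrow> p + q \<in> trunc_alg n"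
  unfolding trunc_alg_def by (simp add: poly_mod_add_left)

lemma trunc_smult: "p \<in> trunc_alg n \<Longrightarrow> smult c p \<in> trunc_alg n"
  unfolding trunc_alg_def by (simp add: mod_smult_left)

lemma trunc_mod: "(p mod monom 1 n) \<in> trunc_alg n"
  unfolding trunc_alg_def by simp

lemma trunc_1: "n \<ge> 1 \<Longrightarrow> (1::'a::field poly) \<in> trunc_alg n"
  unfolding trunc_alg_def
  by (auto intro!: mod_poly_less simp: degree_monom_eq)

lemma trunc_X: "n \<ge> 2 \<Longrightarrow> (monom (c::'a::field) 1) \<in> trunc_alg n"
  unfolding trunc_alg_def
  by (cases "c = 0") (auto intro!: mod_poly_less simp: degree_monom_eq)

lemma coeff_mult_1: "coeff ((p::'a::field poly) * q) (Suc 0) = coeff p 0 * coeff q 1 + coeff p 1 * coeff q 0"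
  by (simp add: coeff_mult)

lemma Sc_sub:
  assumes "n \<ge> 2" "m \<ge> 2"
  shows "is_subalgebra n m (Sc n m c)"
  unfolding is_subalgebra_def
proof (intro conjI ballI allI)
  show "Sc n m c \<subseteq> prod_alg n m" unfolding Sc_def prod_alg_def by auto
  show "(1, 1) \<in> Sc n m c" unfolding Sc_def using assms trunc_1[of n] trunc_1[of m] by simp
  fix x y assume x: "x \<in> Sc n m c" and y: "y \<in> Sc n m c"
  show "(fst x + fst y, snd x + snd y) \<in> Sc n m c"
    using x y unfolding Sc_def by (auto simp: trunc_add algebra_simps)
  show "prod_mult n m x y \<in> Sc n m c"
    using x y assms unfolding Sc_def prod_mult_def
    by (auto simp: trunc_mod coeff_mod_monom coeff_mult_0 coeff_mult_1 algebra_simps)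
next
  fix d x assume x: "x \<in> Sc n m c"
  show "(smult d (fst x), smult d (snd x)) \<in> Sc n m c"
    using x unfolding Sc_def by (auto simp: trunc_smult)
qed

lemma Sc_inj:
  assumes "n \<ge> 2" "m \<ge> 2"
  shows "inj (Sc n m :: 'a::field \<Rightarrow> _)"
proof (rule injI)
  fix c d :: 'a assume eq: "Sc n m c = Sc n m d"
  have "(monom 1 1, monom c 1) \<in> Sc n m c"
    unfolding Sc_def using assms trunc_X[of n 1] trunc_X[of m c] by simp
  hence "(monom 1 1, monom c 1) \<in> Sc n m d" using eq by simp
  thus "c = d" unfolding Sc_def by simp
qed

theorem lemma3p7:
  assumes "infinite (UNIV :: 'a::field set)"
    and "n \<in> {2, 3}" and "m \<in> {2, 3}"
  shows "infinite {S :: ('a poly \<times> 'a poly) set. is_subalgebra n m S}"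
proof
  assume fin: "finite {S :: ('a poly \<times> 'a poly) set. is_subalgebra n m S}"
  have nm: "n \<ge> 2" "m \<ge> 2" using assms by auto
  have "range (Sc n m :: 'a \<Rightarrow> _) \<subseteq> {S. is_subalgebra n m S}"
    using Sc_sub[OF nm] by auto
  hence "finite (range (Sc n m :: 'a \<Rightarrow> _))" using fin finite_subset by blast
  hence "finite (UNIV :: 'a set)" using Sc_inj[OF nm] finite_imageD by blast
  thus False using assms(1) by simp
qed

end
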